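(* Let $m$ and $K\ge0$ be integers with $2^K<m\le 2^{K+1}$, and let $n\ge0$ be an integer. Then the integer $$\prod_{j=1}^{m-1}\prod_{i=1}^{j}\frac{2n+i+j}{i+j}$$ is odd if and only if $n\equiv0\pmod{2^{K+1}}$ or $n\equiv -m\pmod{2^{K+1}}$.
   Context: This product equals the Hankel determinant $\det\left(C_{i+j+m}\right)_{i,j=0}^{n-1}$ of the Catalan numbers $C_k=\frac{1}{k+1}\binom{2k}{k}$, in particular it is an integer. *)

theory Defs
  imports Complex_Main "HOL-Number_Theory.Cong"
begin

definition catalan_hankel_prod :: "nat \<Rightarrow> nat \<Rightarrow> rat" where
  "catalan_hankel_prod m n =
     (\<Prod>j\<in>{1..<m}. \<Prod>i\<in>{1..j}. (of_nat (2*n + i + j) / of_nat (i + j)))"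

end

theory Submission
  imports Defs "HOL-Computational_Algebra.Primes"
begin


definition gg :: "nat \<Rightarrow> nat \<Rightarrow> nat \<Rightarrow> int" where
 "gg q n j = int ((2*n+2*j) div q) + int (j div q) - int ((2*n+j) div q) - int ((2*j) div q)"
definition SS :: "nat \<Rightarrow> nat \<Rightarrow> nat \<Rightarrow> int" where "SS q L n = (\<Sum>j=1..L. gg q n j)"

lemma hermite: "0 < q \<Longrightarrow> (\<Sum>i<q. (x+i) div q) = (x::nat)"
proof (induction x)
  case 0
  have "(\<Sum>i<q. (0+i) div q) = (\<Sum>i<q. 0::nat)" by (intro sum.cong) auto
  then show ?case by simp
next
  case (Suc x)
  obtain q' where q: "q = Suc q'" using Suc.prems by (cases q) auto
  let ?f = "\<lambda>i. (x+i) div q"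
  have a: "(\<Sum>i<Suc q'. ?f (Suc i)) = (\<Sum>i<q'. ?f (Suc i)) + ?f (Suc q')" by simp
  have b: "(\<Sum>i<Suc q'. ?f i) = ?f 0 + (\<Sum>i<q'. ?f (Suc i))" by (rule sum.lessThan_Suc_shift)
  have c: "?f (Suc q') = x div q + 1"
  proof -
    have "?f (Suc q') = (x + q) div q" using q by simp
    also have "\<dots> = x div q + 1" using Suc.prems div_add_self2[of q x] by simp
    finally show ?thesis .
  qed
  have "(\<Sum>i<q. (Suc x+i) div q) = (\<Sum>i<Suc q'. ?f (Suc i))" using q by simp
  also have "\<dots> = (\<Sum>i<Suc q'. ?f i) + 1" using a b c by simp
  also have "\<dots> = Suc x" using Suc q by simp
  finally show ?case .
qed

lemma hermite_int: "0 < q \<Longrightarrow> (\<Sum>i<q. int ((x+i) div q)) = int x"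
  using hermite[of q x] by (metis of_nat_sum)

lemma div_lt2: "0 < (q::nat) \<Longrightarrow> a < 2*q \<Longrightarrow> a div q = (if a < q then 0 else 1)"
  by (auto simp: le_div_geq div_less)

lemma div_lt3: "0 < (q::nat) \<Longrightarrow> a < 3*q \<Longrightarrow> int (a div q) = (if a < q then 0 else if a < 2*q then 1 else 2)"
proof -
  assume q: "0 < q" and a: "a < 3*q"
  show ?thesis
  proof (cases "a < q")
    case True then show ?thesis by simp
  next
    case False
    then have "a div q = Suc ((a - q) div q)" using q by (simp add: le_div_geq)
    moreover have "(a-q) div q = (if a - q < q then 0 else 1)" using div_lt2[of q "a-q"] q a by simp
    ultimately show ?thesis using False by auto
  qed
qed

lemma dbl: "0 < (q::nat) \<Longrightarrow> (2*y) div q = y div q + (y + q div 2) div q"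
proof -
  assume q: "0 < q"
  define a r where "a = y div q" and "r = y mod q"
  have y: "y = r + a*q" using a_def r_def by simp
  have r: "r < q" using q r_def by simp
  have "2*y = 2*r + (2*a)*q" using y by simp
  then have 1: "(2*y) div q = 2*a + (2*r) div q" using q by (simp only: div_mult_self1)
  have "y + q div 2 = (r + q div 2) + a*q" using y by simp
  then have 2: "(y + q div 2) div q = a + (r + q div 2) div q" using q by (simp only: div_mult_self1)
  have h: "q = 2*(q div 2) + q mod 2" "q mod 2 < 2" by simp_all
  have lt1: "2*r < 2*q" using r by simp
  have lt2: "r + q div 2 < 2*q" using r h by linarith
  have iff: "(r + q div 2 < q) = (2*r < q)" using h by linarith
  have 3: "(2*r) div q = (r + q div 2) div q"
    using div_lt2[OF q lt1] div_lt2[OF q lt2] iff by simp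
  show ?thesis using 1 2 3 a_def by simp
qed

lemma gg_alt: "0 < q \<Longrightarrow> gg q n j = int ((n+j) div q) + int ((n + q div 2 + j) div q)
    - int ((2*n+j) div q) - int ((q div 2 + j) div q)"
proof -
  assume q: "0 < q"
  have "(2*n+2*j) div q = (n+j) div q + (n + j + q div 2) div q" using dbl[OF q, of "n+j"]
    by (simp add: algebra_simps)
  moreover have "(2*j) div q = j div q + (j + q div 2) div q" using dbl[OF q, of j] by simp
  ultimately show ?thesis unfolding gg_def by (simp add: algebra_simps)
qed

lemma gg_per: "0 < q \<Longrightarrow> gg q (n+q) j = gg q n j"
proof -
  assume q: "0 < q"
  have e1: "2*(n+q)+2*j = (2*n+2*j) + 2*q" by simp
  have e2: "2*(n+q)+j = (2*n+j) + 2*q" by simp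
  have "(2*(n+q)+2*j) div q = (2*n+2*j) div q + 2" unfolding e1 using q by (simp only: div_mult_self1)
  moreover have "(2*(n+q)+j) div q = (2*n+j) div q + 2" unfolding e2 using q by (simp only: div_mult_self1)
  ultimately show ?thesis unfolding gg_def by simp
qed

lemma SS_per_n: "0 < q \<Longrightarrow> SS q L (n+q) = SS q L n"
  unfolding SS_def by (simp add: gg_per)

lemma SS_mod_n: "0 < q \<Longrightarrow> SS q L n = SS q L (n mod q)"
proof -
  assume q: "0 < q"
  have "\<And>c. SS q L (r + q*c) = SS q L r" for r
  proof -
    fix c show "SS q L (r + q*c) = SS q L r"
    proof (induction c)
      case (Suc c)
      have "SS q L (r + q*Suc c) = SS q L ((r + q*c) + q)" by (simp add: algebra_simps)
      also have "\<dots> = SS q L (r+q*c)" by (rule SS_per_n[OF q])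
      finally show ?case using Suc by simp
    qed simp
  qed
  then have e: "SS q L (n mod q + q * (n div q)) = SS q L (n mod q)" by blast
  have "SS q L n = SS q L (n mod q + q * (n div q))" by simp
  then show ?thesis using e by simp
qed

lemma SS_add: "SS q (L+k) n = SS q L n + (\<Sum>i<k. gg q n (L+1+i))"
proof (induction k)
  case (Suc k)
  have "SS q (L + Suc k) n = SS q (L+k) n + gg q n (Suc (L+k))"
    unfolding SS_def by simp
  then show ?case using Suc by simp
qed (simp add: SS_def)

lemma window0: "0 < q \<Longrightarrow> (\<Sum>i<q. gg q n (L+1+i)) = 0"
proof -
  assume q: "0 < q"
  have "(\<Sum>i<q. gg q n (L+1+i)) = (\<Sum>i<q. int ((n+L+1+i) div q)) + (\<Sum>i<q. int ((n + q div 2 + L+1+i) div q))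
     - (\<Sum>i<q. int ((2*n+L+1+i) div q)) - (\<Sum>i<q. int ((q div 2 + L+1+i) div q))"
  proof -
    have "gg q n (L+1+i) = int ((n+L+1+i) div q) + int ((n + q div 2 + L+1+i) div q)
     - int ((2*n+L+1+i) div q) - int ((q div 2 + L+1+i) div q)" for i
      using gg_alt[OF q, of n "L+1+i"] by (simp add: algebra_simps)
    then show ?thesis by (simp only: sum.distrib sum_subtractf)
  qed
  also have "\<dots> = int (n+L+1) + int (n + q div 2 + L+1) - int (2*n+L+1) - int (q div 2 + L+1)"
    by (simp only: hermite_int[OF q])
  also have "\<dots> = 0" by simp
  finally show ?thesis .
qed

lemma SS_per_L: "0 < q \<Longrightarrow> SS q (L+q) n = SS q L n"
  using SS_add[of q L q n] window0[of q n L] by simp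

lemma SS_mod_L: "0 < q \<Longrightarrow> SS q L n = SS q (L mod q) n"
proof -
  assume q: "0 < q"
  have "SS q (r + q*c) n = SS q r n" for r c
  proof (induction c)
    case (Suc c)
    have "SS q (r + q*Suc c) n = SS q ((r + q*c) + q) n" by (simp add: algebra_simps)
    also have "\<dots> = SS q (r+q*c) n" by (rule SS_per_L[OF q])
    finally show ?case using Suc by simp
  qed simp
  then have e: "SS q (L mod q + q * (L div q)) n = SS q (L mod q) n" by blast
  have "SS q L n = SS q (L mod q + q * (L div q)) n" by simp
  then show ?thesis using e by simp
qed


definition cl :: "int \<Rightarrow> int \<Rightarrow> int" where "cl L z = max 0 (min L z)"
definition WW :: "int \<Rightarrow> int \<Rightarrow> int \<Rightarrow> int" where "WW q L x = cl L (x+L+1-q) + cl L (x+L+1-2*q)"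
definition EE :: "int \<Rightarrow> int \<Rightarrow> int \<Rightarrow> int" where
  "EE q L n = WW q L n - WW q L (2*n) + WW q L (n + q div 2) - WW q L (q div 2)"

definition Xp :: "int \<Rightarrow> int \<Rightarrow> int \<Rightarrow> int \<Rightarrow> int" where
  "Xp q L n s = max 0 (n+L+1-q) - min L (max 0 (2*n+L+1-q)) - max 0 (2*n+L+1-2*q)
     + min L (max 0 (n+s+L+1-q)) + max 0 (n+s+L+1-2*q) - max 0 (s+L+1-q)"

lemma EE_alt:
  assumes "0 < q" "0 \<le> L" "L < q" "0 \<le> n" "n < q" "q = 2*s \<or> q = 2*s+1"
  shows "EE q L n = Xp q L n s"
proof -
  have s: "q div 2 = s" using assms(6) by auto
  have 1: "WW q L n = max 0 (n+L+1-q)" using assms unfolding WW_def cl_def by auto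
  have 2: "WW q L (2*n) = min L (max 0 (2*n+L+1-q)) + max 0 (2*n+L+1-2*q)" using assms unfolding WW_def cl_def by auto
  have 3: "WW q L (n+s) = min L (max 0 (n+s+L+1-q)) + max 0 (n+s+L+1-2*q)" using assms unfolding WW_def cl_def by auto
  have 4: "WW q L s = max 0 (s+L+1-q)" using assms unfolding WW_def cl_def by auto
  show ?thesis unfolding EE_def Xp_def s 1 2 3 4 by simp
qed

lemma P1: "0 < (q::int) \<Longrightarrow> 0 \<le> L \<Longrightarrow> L < q \<Longrightarrow> 0 \<le> n \<Longrightarrow> n < q \<Longrightarrow> q = 2*s \<or> q = 2*s+1 \<Longrightarrow> 
   0 \<le> Xp q L n s"
  by (auto simp add: Xp_def max_def min_def)
lemma P2: "0 < (q::int) \<Longrightarrow> 0 \<le> L \<Longrightarrow> L < q \<Longrightarrow> 0 \<le> n \<Longrightarrow> n + L + 1 = q \<Longrightarrow> q = 2*s \<or> q = 2*s+1 \<Longrightarrow> 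
   0 = Xp q L n s"
  by (auto simp add: Xp_def max_def min_def)
lemma P3: "0 < (q::int) \<Longrightarrow> 0 \<le> L \<Longrightarrow> L+1 \<le> s \<Longrightarrow> 0 \<le> n \<Longrightarrow> n < q \<Longrightarrow> q = 2*s \<Longrightarrow> 
   (Xp q L n s = 0) \<longleftrightarrow>
   (n + L < s \<or> (s \<le> n \<and> n + L < 2*s))"
  by (auto simp add: Xp_def max_def min_def)
lemma P4: "0 < (q::int) \<Longrightarrow> s < L+1 \<Longrightarrow> L < q \<Longrightarrow> 0 < n \<Longrightarrow> n+L+1 < q \<Longrightarrow> q = 2*s \<Longrightarrow> 
   0 < Xp q L n s"
  by (auto simp add: Xp_def max_def min_def)


lemma Wsum: "0 < q \<Longrightarrow> x + L < 3*q \<Longrightarrow>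
  (\<Sum>j=1..L. int ((x+j) div q)) = WW (int q) (int L) (int x)"
proof (induction L)
  case 0
  then show ?case by (simp add: WW_def cl_def)
next
  case (Suc L)
  have IH: "(\<Sum>j=1..L. int ((x+j) div q)) = WW (int q) (int L) (int x)" using Suc by simp
  have "(\<Sum>j=1..Suc L. int ((x+j) div q)) = (\<Sum>j=1..L. int ((x+j) div q)) + int ((x + Suc L) div q)"
    by simp
  also have "int ((x + Suc L) div q) = (if x + Suc L < q then 0 else if x + Suc L < 2*q then 1 else 2)"
    using div_lt3[of q "x + Suc L"] Suc.prems by simp
  finally show ?case using IH unfolding WW_def cl_def by (auto simp: max_def min_def)
qed

lemma SS_base: assumes q: "0 < q" and "L < q" "n < q"
  shows "SS q L n = EE (int q) (int L) (int n)"
proof -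
  have "SS q L n = (\<Sum>j=1..L. int ((n+j) div q)) + (\<Sum>j=1..L. int ((n + q div 2+j) div q))
     - (\<Sum>j=1..L. int ((2*n+j) div q)) - (\<Sum>j=1..L. int ((q div 2+j) div q))"
  proof -
    have "SS q L n = (\<Sum>j=1..L. int ((n+j) div q) + int ((n + q div 2+j) div q)
      - int ((2*n+j) div q) - int ((q div 2+j) div q))"
      unfolding SS_def by (intro sum.cong) (simp_all add: gg_alt[OF q])
    then show ?thesis by (simp only: sum.distrib sum_subtractf)
  qed
  also have "\<dots> = WW (int q) (int L) (int n) + WW (int q) (int L) (int (n + q div 2))
     - WW (int q) (int L) (int (2*n)) - WW (int q) (int L) (int (q div 2))"
  proof -
    have qq: "q div 2 \<le> q" by simp
    have w1: "(\<Sum>j=1..L. int ((n+j) div q)) = WW (int q) (int L) (int n)"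
      by (rule Wsum) (use assms in auto)
    have w2: "(\<Sum>j=1..L. int ((n + q div 2+j) div q)) = WW (int q) (int L) (int (n + q div 2))"
      by (rule Wsum) (use assms qq in auto)
    have w3: "(\<Sum>j=1..L. int ((2*n+j) div q)) = WW (int q) (int L) (int (2*n))"
      by (rule Wsum) (use assms in auto)
    have w4: "(\<Sum>j=1..L. int ((q div 2+j) div q)) = WW (int q) (int L) (int (q div 2))"
      by (rule Wsum) (use assms qq in auto)
    show ?thesis by (simp only: w1 w2 w3 w4)
  qed
  also have "\<dots> = EE (int q) (int L) (int n)" unfolding EE_def by (simp add: zdiv_int)
  finally show ?thesis .
qed

lemma s_ex: "\<exists>s::int. q = 2*s \<or> q = 2*s+1"
  by presburger

lemma SS_nonneg: "0 < q \<Longrightarrow> 0 \<le> SS q L n"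
proof -
  assume q: "0 < q"
  have "SS q L n = SS q (L mod q) (n mod q)" using SS_mod_L[OF q] SS_mod_n[OF q] by metis
  also have "\<dots> = EE (int q) (int (L mod q)) (int (n mod q))" using q by (simp add: SS_base)
  finally have e: "SS q L n = EE (int q) (int (L mod q)) (int (n mod q))" .
  obtain s where s: "int q = 2*s \<or> int q = 2*s+1" using s_ex by blast
  have "L mod q < q" "n mod q < q" using q by auto
  then have "EE (int q) (int (L mod q)) (int (n mod q)) = Xp (int q) (int (L mod q)) (int (n mod q)) s"
    using q s by (intro EE_alt) auto
  moreover have "0 \<le> Xp (int q) (int (L mod q)) (int (n mod q)) s"
    using q s \<open>L mod q < q\<close> \<open>n mod q < q\<close> by (intro P1) auto
  ultimately show ?thesis unfolding e by simp
qed


lemma Zero_A: "0 < q \<Longrightarrow> q dvd n \<Longrightarrow> SS q L n = 0"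
proof -
  assume q: "0 < q" and d: "q dvd n"
  have "SS q L n = SS q L 0" using SS_mod_n[OF q, of L n] d by simp
  also have "\<dots> = 0" unfolding SS_def gg_def by simp
  finally show ?thesis .
qed

lemma dvd_eq_lt2: "(q::nat) dvd x \<Longrightarrow> 0 < x \<Longrightarrow> x < 2*q \<Longrightarrow> x = q"
proof -
  assume d: "q dvd x" and x: "0 < x" "x < 2*q"
  have q: "0 < q" using x by simp
  have e: "x = q * (x div q)" using d by simp
  have "x div q = (if x < q then 0 else 1)" using div_lt2[OF q x(2)] .
  then show ?thesis using e x by (cases "x < q") auto
qed

lemma Zero_B: "0 < q \<Longrightarrow> q dvd (n + L + 1) \<Longrightarrow> SS q L n = 0"
proof -
  assume q: "0 < q" and d: "q dvd (n + L + 1)"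
  have "SS q L n = SS q (L mod q) (n mod q)" using SS_mod_L[OF q] SS_mod_n[OF q] by metis
  also have "\<dots> = EE (int q) (int (L mod q)) (int (n mod q))" using q by (simp add: SS_base)
  finally have e: "SS q L n = EE (int q) (int (L mod q)) (int (n mod q))" .
  have "(n mod q + L mod q + 1) mod q = (n + L + 1) mod q"
    by (metis mod_add_left_eq mod_add_right_eq)
  then have "q dvd (n mod q + L mod q + 1)" using d by (simp add: dvd_eq_mod_eq_0)
  moreover have "n mod q < q" "L mod q < q" using q by auto
  moreover have "n mod q + L mod q + 1 < 2*q" using \<open>n mod q < q\<close> \<open>L mod q < q\<close> by linarith
  ultimately have sum: "n mod q + L mod q + 1 = q" by (intro dvd_eq_lt2) auto
  obtain s where s: "int q = 2*s \<or> int q = 2*s+1" using s_ex by blast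
  have "L mod q < q" "n mod q < q" using q by auto
  then have "EE (int q) (int (L mod q)) (int (n mod q)) = Xp (int q) (int (L mod q)) (int (n mod q)) s"
    using q s by (intro EE_alt) auto
  moreover have "0 = Xp (int q) (int (L mod q)) (int (n mod q)) s"
    using q s \<open>L mod q < q\<close> \<open>n mod q < q\<close> sum by (intro P2) auto
  ultimately show ?thesis unfolding e by simp
qed

lemma Large_iff: assumes h: "0 < h" "L + 1 \<le> h"
  shows "SS (2*h) L n = 0 \<longleftrightarrow> (n mod (2*h) + L < h \<or> (h \<le> n mod (2*h) \<and> n mod (2*h) + L < 2*h))"
proof -
  have q: "0 < 2*h" using h by simp
  have "SS (2*h) L n = SS (2*h) L (n mod (2*h))" by (rule SS_mod_n[OF q])
  also have "\<dots> = EE (int (2*h)) (int L) (int (n mod (2*h)))" using q h by (intro SS_base) auto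
  finally have e: "SS (2*h) L n = EE (int (2*h)) (int L) (int (n mod (2*h)))" .
  have "n mod (2*h) < 2*h" using q by auto
  then have "int (n mod (2*h)) < int (2*h)" by (simp only: of_nat_less_iff)
  then have rr: "int (n mod (2*h)) < 2 * int h" by simp
  then have "EE (int (2*h)) (int L) (int (n mod (2*h))) = Xp (int (2*h)) (int L) (int (n mod (2*h))) (int h)"
    using h rr by (intro EE_alt) auto
  moreover have "(Xp (int (2*h)) (int L) (int (n mod (2*h))) (int h) = 0) \<longleftrightarrow>
     (int (n mod (2*h)) + int L < int h \<or> (int h \<le> int (n mod (2*h)) \<and> int (n mod (2*h)) + int L < 2 * int h))"
  proof (rule P3)
    show "int (n mod (2*h)) < int (2*h)" using \<open>n mod (2*h) < 2*h\<close> by simp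
  qed (use h in auto)
  ultimately show ?thesis unfolding e by linarith
qed

lemma Small_pos: assumes "0 < h" "h < L+1" "L < 2*h" "0 < n mod (2*h)" "n mod (2*h) + L + 1 < 2*h"
  shows "0 < SS (2*h) L n"
proof -
  have q: "0 < 2*h" using assms by simp
  have "SS (2*h) L n = SS (2*h) L (n mod (2*h))" by (rule SS_mod_n[OF q])
  also have "\<dots> = EE (int (2*h)) (int L) (int (n mod (2*h)))" using q assms by (intro SS_base) auto
  finally have e: "SS (2*h) L n = EE (int (2*h)) (int L) (int (n mod (2*h)))" .
  have "n mod (2*h) < 2*h" using q by auto
  then have "int (n mod (2*h)) < int (2*h)" by (simp only: of_nat_less_iff)
  then have rr: "int (n mod (2*h)) < 2 * int h" by simp
  then have "EE (int (2*h)) (int L) (int (n mod (2*h))) = Xp (int (2*h)) (int L) (int (n mod (2*h))) (int h)"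
    using assms rr by (intro EE_alt) auto
  moreover have "0 < Xp (int (2*h)) (int L) (int (n mod (2*h))) (int h)"
    using assms by (intro P4) auto
  ultimately show ?thesis unfolding e by simp
qed



lemma gap: "(d::nat) dvd a \<Longrightarrow> d dvd b \<Longrightarrow> a < b \<Longrightarrow> a + d \<le> b"
proof -
  assume "d dvd a" "d dvd b" "a < b"
  then have "d dvd (b - a)" by (simp add: dvd_diff_nat)
  moreover have "0 < b - a" using \<open>a < b\<close> by simp
  ultimately have "d \<le> b - a" by (rule dvd_imp_le)
  then show ?thesis using \<open>a < b\<close> by simp
qed

lemma char2:
  assumes K: "2^K < m" "m \<le> 2^(K+1)" and N: "K + 2 \<le> N"
  shows "(\<forall>k\<in>{1..N}. SS (2^k) (m-1) n = 0) \<longleftrightarrow> ((2::nat)^(K+1) dvd n \<or> (2::nat)^(K+1) dvd (n+m))"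
proof -
  define q1 :: nat where "q1 = 2^(K+1)"
  have m1: "1 \<le> m" using K(1) by linarith
  have q1pos: "0 < q1" unfolding q1_def by simp
  have mq1: "m \<le> q1" using K unfolding q1_def by simp
  show ?thesis unfolding q1_def[symmetric]
  proof
    assume c: "q1 dvd n \<or> q1 dvd (n+m)"
    show "\<forall>k\<in>{1..N}. SS (2^k) (m-1) n = 0"
    proof
      fix k assume k: "k \<in> {1..N}"
      show "SS (2^k) (m-1) n = 0"
      proof (cases "k \<le> K+1")
        case True
        have d: "(2::nat)^k dvd q1" unfolding q1_def using True by (rule le_imp_power_dvd)
        have p: "0 < (2::nat)^k" by simp
        from c show ?thesis
        proof
          assume "q1 dvd n"
          then have "2^k dvd n" using d dvd_trans by blast
          then show ?thesis by (rule Zero_A[OF p])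
        next
          assume "q1 dvd (n+m)"
          then have "2^k dvd (n + (m-1) + 1)" using d dvd_trans m1 by simp
          then show ?thesis by (rule Zero_B[OF p])
        qed
      next
        case False
        define h :: nat where "h = 2^(k-1)"
        have k2: "(2::nat)^k = 2*h" unfolding h_def using k by (cases k) auto
        have hpos: "0 < h" unfolding h_def by simp
        have q1h: "q1 dvd h" unfolding q1_def h_def using False by (intro le_imp_power_dvd) simp
        have q1h2: "q1 dvd 2*h" using q1h by simp
        have q1le: "q1 \<le> h" using q1h hpos by (simp add: dvd_imp_le)
        have Lh: "m - 1 + 1 \<le> h" using mq1 q1le m1 by simp
        define r where "r = n mod (2*h)"
        have r2: "r < 2*h" unfolding r_def using hpos by simp
        have rq: "r mod q1 = n mod q1" unfolding r_def using q1h2 by (simp add: mod_mod_cancel)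
        have goal: "r + (m-1) < h \<or> (h \<le> r \<and> r + (m-1) < 2*h)"
          using c
        proof
          assume "q1 dvd n"
          then have dr: "q1 dvd r" using rq by (simp add: dvd_eq_mod_eq_0)
          show ?thesis
          proof (cases "r < h")
            case True
            then have "r + q1 \<le> h" using gap[OF dr q1h] by simp
            then show ?thesis using mq1 m1 by simp
          next
            case False
            then have "r + q1 \<le> 2*h" using gap[OF dr q1h2 r2] by simp
            then show ?thesis using False mq1 m1 by arith
          qed
        next
          assume "q1 dvd (n+m)"
          have "(r + m) mod q1 = (r mod q1 + m) mod q1" by (simp add: mod_add_left_eq)
          also have "\<dots> = (n mod q1 + m) mod q1" using rq by simp
          also have "\<dots> = (n + m) mod q1" by (simp add: mod_add_left_eq)
          finally have "(r + m) mod q1 = (n + m) mod q1" .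
          then have dr: "q1 dvd (r+m)" using \<open>q1 dvd (n+m)\<close> by (simp add: dvd_eq_mod_eq_0)
          show ?thesis
          proof (cases "r < h")
            case True
            have "r + m \<le> h"
            proof (rule ccontr)
              assume "\<not> r + m \<le> h"
              then have "h + q1 \<le> r + m" using gap[OF q1h dr] by simp
              then show False using True mq1 by simp
            qed
            then show ?thesis using m1 by simp
          next
            case False
            have "r + m \<le> 2*h"
            proof (rule ccontr)
              assume "\<not> r + m \<le> 2*h"
              then have "2*h + q1 \<le> r + m" using gap[OF q1h2 dr] by simp
              then show False using r2 mq1 by simp
            qed
            then show ?thesis using False m1 by arith
          qed
        qed
        show ?thesis unfolding k2 using Large_iff[OF hpos Lh, of n] goal unfolding r_def by simp
      qed
    qed
  next
    assume all: "\<forall>k\<in>{1..N}. SS (2^k) (m-1) n = 0"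
    show "q1 dvd n \<or> q1 dvd (n+m)"
    proof (rule ccontr)
      assume nc: "\<not> (q1 dvd n \<or> q1 dvd (n+m))"
      define r where "r = n mod q1"
      have r0: "0 < r" using nc unfolding r_def by (simp add: dvd_eq_mod_eq_0)
      have rlt: "r < q1" unfolding r_def using q1pos by simp
      have "(r + m) mod q1 = (n + m) mod q1" unfolding r_def by (simp add: mod_add_left_eq)
      then have rm: "r + m \<noteq> q1" using nc by (auto simp: dvd_eq_mod_eq_0)
      show False
      proof (cases "r + m < q1")
        case True
        define h :: nat where "h = 2^K"
        have q1h: "q1 = 2*h" unfolding q1_def h_def by simp
        have hpos: "0 < h" unfolding h_def by simp
        have kin: "K+1 \<in> {1..N}" using N by simp
        have "0 < SS (2*h) (m-1) n"
        proof (rule Small_pos[OF hpos])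
          show "h < m - 1 + 1" using K m1 unfolding h_def by simp
          show "m - 1 < 2*h" using mq1 m1 q1h by simp
          show "0 < n mod (2*h)" using r0 unfolding r_def q1h .
          show "n mod (2*h) + (m-1) + 1 < 2*h" using True m1 unfolding r_def q1h by simp
        qed
        moreover have "SS (2*h) (m-1) n = 0"
        proof -
          have "SS (2^(K+1)) (m-1) n = 0" using all kin by blast
          moreover have "(2::nat)^(K+1) = 2*h" unfolding h_def by simp
          ultimately show ?thesis by simp
        qed
        ultimately show False by simp
      next
        case False
        then have big: "q1 < r + m" using rm by simp
        have q1pos': "0 < q1" by (rule q1pos)
        have kin: "K+2 \<in> {1..N}" using N by simp
        have e2: "(2::nat)^(K+2) = 2*q1" unfolding q1_def by simp
        have Lh: "m - 1 + 1 \<le> q1" using mq1 m1 by simp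
        have "SS (2*q1) (m-1) n = 0"
        proof -
          have "SS (2^(K+2)) (m-1) n = 0" using all kin by blast
          then show ?thesis by (simp only: e2)
        qed
        then have disj: "n mod (2*q1) + (m-1) < q1 \<or> (q1 \<le> n mod (2*q1) \<and> n mod (2*q1) + (m-1) < 2*q1)"
          using Large_iff[OF q1pos' Lh, of n] by simp
        define r' where "r' = n mod (2*q1)"
        have r'lt: "r' < 2*q1" unfolding r'_def using q1pos by simp
        have r'm: "r' mod q1 = r" unfolding r'_def r_def by (simp add: mod_mod_cancel)
        show False
        proof (cases "r' < q1")
          case True
          then have "r' = r" using r'm by simp
          then show False using disj big True m1 unfolding r'_def[symmetric] by arith
        next
          case False
          then have "r' mod q1 = r' - q1" using r'lt by (simp add: le_mod_geq)
          then have "r' = r + q1" using r'm False by simp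
          then show False using disj big m1 unfolding r'_def[symmetric] by arith
        qed
      qed
    qed
  qed
qed



lemma cnt_div: "0 < q \<Longrightarrow> (\<Sum>i\<in>{1..j}. if q dvd (c+i) then 1 else 0::int) = int ((c+j) div q) - int (c div q)"
proof (induction j)
  case (Suc j)
  have "(c + Suc j) div q = (c+j) div q + (if q dvd Suc (c+j) then 1 else 0)"
    using div_Suc[of "c+j" q] by (auto simp: dvd_eq_mod_eq_0)
  then show ?case using Suc by simp
qed simp

lemma mult_as_sum:
  assumes p: "prime (p::nat)" and x: "0 < x" "x \<le> N"
  shows "int (multiplicity p x) = (\<Sum>k\<in>{1..N}. if p^k dvd x then 1 else 0)"
proof -
  let ?M = "multiplicity p x"
  have nu: "\<not> is_unit p" using prime_gt_1_nat[OF p] by simp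
  have iff: "p^k dvd x \<longleftrightarrow> k \<le> ?M" for k
    using power_dvd_iff_le_multiplicity[of x p k] x nu by simp
  have "p ^ ?M dvd x" by (rule multiplicity_dvd)
  then have "p ^ ?M \<le> x" using x dvd_imp_le by blast
  moreover have "?M < 2 ^ ?M" by (rule less_exp)
  moreover have "2 ^ ?M \<le> p ^ ?M" using prime_ge_2_nat[OF p] by (simp add: power_mono)
  ultimately have MN: "?M \<le> N" using x by linarith
  have "(\<Sum>k\<in>{1..N}. if p^k dvd x then 1 else 0::int) = (\<Sum>k\<in>{1..N}. if k \<le> ?M then 1 else 0)"
    using iff by simp
  also have "\<dots> = (\<Sum>k\<in>{k\<in>{1..N}. k \<le> ?M}. (1::int))" by (rule sum.inter_filter[symmetric]) simp
  also have "{k\<in>{1..N}. k \<le> ?M} = {1..?M}" using MN by auto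
  finally show ?thesis by simp
qed

lemma mult_double_prod:
  fixes f :: "nat \<Rightarrow> nat \<Rightarrow> nat" and m :: nat
  assumes p: "prime (p::nat)" and f: "\<And>i j. i \<in> {1..j} \<Longrightarrow> 0 < f i j"
  shows "multiplicity p (\<Prod>j\<in>{1..<m}. \<Prod>i\<in>{1..j}. f i j) = (\<Sum>j\<in>{1..<m}. \<Sum>i\<in>{1..j}. multiplicity p (f i j))"
proof -
  have pe: "prime_elem p" using p by simp
  have fnz: "i \<in> {1..j} \<Longrightarrow> f i j \<noteq> 0" for i j using f[of i j] by simp
  have nz: "(\<Prod>i\<in>{1..j}. f i j) \<noteq> 0" for j using prod_pos[of "{1..j}" "\<lambda>i. f i j"] f by (metis less_not_refl2)
  have "multiplicity p (\<Prod>j\<in>{1..<m}. \<Prod>i\<in>{1..j}. f i j) = (\<Sum>j\<in>{1..<m}. multiplicity p (\<Prod>i\<in>{1..j}. f i j))"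
  proof (rule prime_elem_multiplicity_prod_distrib[OF pe])
    show "0 \<notin> (\<lambda>j. \<Prod>i\<in>{1..j}. f i j) ` {1..<m}" using nz by (metis (no_types, lifting) imageE)
  qed simp
  also have "\<dots> = (\<Sum>j\<in>{1..<m}. \<Sum>i\<in>{1..j}. multiplicity p (f i j))"
    by (intro sum.cong refl prime_elem_multiplicity_prod_distrib[OF pe]) (auto simp: fnz)
  finally show ?thesis .
qed

lemma mult_count:
  fixes f :: "nat \<Rightarrow> nat \<Rightarrow> nat" and m N :: nat
  assumes p: "prime (p::nat)" and fpos: "\<And>i j. i \<in> {1..j} \<Longrightarrow> 0 < f i j" and fle: "\<And>i j. j < m \<Longrightarrow> i \<le> j \<Longrightarrow> f i j \<le> N"
  shows "int (multiplicity p (\<Prod>j\<in>{1..<m}. \<Prod>i\<in>{1..j}. f i j)) =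
    (\<Sum>k\<in>{1..N}. \<Sum>j\<in>{1..<m}. \<Sum>i\<in>{1..j}. if p^k dvd f i j then 1 else 0)"
proof -
  have "int (multiplicity p (\<Prod>j\<in>{1..<m}. \<Prod>i\<in>{1..j}. f i j)) =
     (\<Sum>j\<in>{1..<m}. \<Sum>i\<in>{1..j}. int (multiplicity p (f i j)))"
    by (subst mult_double_prod[OF p fpos]) (simp_all only: of_nat_sum)
  also have "\<dots> = (\<Sum>j\<in>{1..<m}. \<Sum>i\<in>{1..j}. \<Sum>k\<in>{1..N}. if p^k dvd f i j then 1 else 0)"
    by (intro sum.cong refl mult_as_sum[OF p fpos]) (use fle in auto)
  also have "\<dots> = (\<Sum>j\<in>{1..<m}. \<Sum>k\<in>{1..N}. \<Sum>i\<in>{1..j}. if p^k dvd f i j then 1 else 0)"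
    by (intro sum.cong refl sum.swap)
  also have "\<dots> = (\<Sum>k\<in>{1..N}. \<Sum>j\<in>{1..<m}. \<Sum>i\<in>{1..j}. if p^k dvd f i j then 1 else 0)"
    by (rule sum.swap)
  finally show ?thesis .
qed


lemma key_mult:
  fixes p m n :: nat
  assumes p: "prime p" and m1: "1 \<le> m"
  defines "A \<equiv> (\<Prod>j\<in>{1..<m}. \<Prod>i\<in>{1..j}. 2*n+i+j)"
      and "B \<equiv> (\<Prod>j\<in>{1..<m}. \<Prod>i\<in>{1..j}. i+j)"
  shows "int (multiplicity p A) - int (multiplicity p B) = (\<Sum>k\<in>{1..2*n+2*m}. SS (p^k) (m-1) n)"
proof -
  define N where "N = 2*n+2*m"
  have a: "int (multiplicity p A) = (\<Sum>k\<in>{1..N}. \<Sum>j\<in>{1..<m}. \<Sum>i\<in>{1..j}. if p^k dvd (2*n+i+j) then 1 else 0)"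
    unfolding A_def by (rule mult_count[OF p]) (auto simp: N_def)
  have b: "int (multiplicity p B) = (\<Sum>k\<in>{1..N}. \<Sum>j\<in>{1..<m}. \<Sum>i\<in>{1..j}. if p^k dvd (i+j) then 1 else 0)"
    unfolding B_def by (rule mult_count[OF p]) (auto simp: N_def)
  have pk: "0 < p^k" for k using prime_gt_0_nat[OF p] by simp
  have ca: "(\<Sum>i\<in>{1..j}. if p^k dvd (2*n+i+j) then 1 else 0::int) = int ((2*n+j+j) div p^k) - int ((2*n+j) div p^k)" for k j
  proof -
    have "(\<Sum>i\<in>{1..j}. if p^k dvd (2*n+i+j) then 1 else 0::int) = (\<Sum>i\<in>{1..j}. if p^k dvd ((2*n+j)+i) then 1 else 0)"
      by (intro sum.cong refl) (simp add: algebra_simps)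
    also have "\<dots> = int ((2*n+j+j) div p^k) - int ((2*n+j) div p^k)" by (rule cnt_div[OF pk])
    finally show ?thesis .
  qed
  have cb: "(\<Sum>i\<in>{1..j}. if p^k dvd (i+j) then 1 else 0::int) = int ((j+j) div p^k) - int (j div p^k)" for k j
  proof -
    have "(\<Sum>i\<in>{1..j}. if p^k dvd (i+j) then 1 else 0::int) = (\<Sum>i\<in>{1..j}. if p^k dvd (j+i) then 1 else 0)"
      by (intro sum.cong refl) (simp add: algebra_simps)
    also have "\<dots> = int ((j+j) div p^k) - int (j div p^k)" by (rule cnt_div[OF pk])
    finally show ?thesis .
  qed
  have iv: "{1..<m} = {1..m-1}" using m1 by auto
  have "int (multiplicity p A) - int (multiplicity p B) =
     (\<Sum>k\<in>{1..N}. \<Sum>j\<in>{1..<m}. (int ((2*n+j+j) div p^k) - int ((2*n+j) div p^k)) - (int ((j+j) div p^k) - int (j div p^k)))"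
    unfolding a b ca cb by (simp only: sum_subtractf)
  also have "\<dots> = (\<Sum>k\<in>{1..N}. SS (p^k) (m-1) n)"
    unfolding SS_def iv by (intro sum.cong refl) (simp add: gg_def mult_2 add.assoc)
  finally show ?thesis unfolding N_def .
qed

theorem corollary3p2:
  fixes m n K :: nat
  assumes "2 ^ K < m" and "m \<le> 2 ^ (K + 1)"
  shows "(\<exists>k::int. of_int k = catalan_hankel_prod m n \<and> odd k) \<longleftrightarrow>
         ([int n = 0] (mod 2 ^ (K + 1)) \<or> [int n = - int m] (mod 2 ^ (K + 1)))"
proof -
  have m1: "1 \<le> m" using assms(1) by linarith
  define A where "A = (\<Prod>j\<in>{1..<m}. \<Prod>i\<in>{1..j}. 2*n+i+j)"
  define B where "B = (\<Prod>j\<in>{1..<m}. \<Prod>i\<in>{1..j}. i+j)"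
  define N where "N = 2*n+2*m"
  have Anz: "A \<noteq> 0" unfolding A_def by simp
  have Bnz: "B \<noteq> 0" unfolding B_def by simp
  have P: "catalan_hankel_prod m n = of_nat A / of_nat B"
    unfolding catalan_hankel_prod_def A_def B_def by (simp add: prod_dividef)
  have key: "prime p \<Longrightarrow> int (multiplicity p A) - int (multiplicity p B) = (\<Sum>k\<in>{1..N}. SS (p^k) (m-1) n)" for p
    unfolding A_def B_def N_def by (rule key_mult[OF _ m1])
  have nonneg: "prime p \<Longrightarrow> multiplicity p B \<le> multiplicity p A" for p
  proof -
    assume p: "prime p"
    have "0 \<le> (\<Sum>k\<in>{1..N}. SS (p^k) (m-1) n)"
      using prime_gt_0_nat[OF p] by (intro sum_nonneg SS_nonneg) simp
    then show ?thesis using key[OF p] by simp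
  qed
  have "B dvd A" by (rule multiplicity_le_imp_dvd[OF Bnz nonneg])
  then obtain c where c: "A = B * c" by blast
  have cnz: "c \<noteq> 0" using Anz c by auto
  have Pc: "catalan_hankel_prod m n = of_nat c" unfolding P c using Bnz by simp
  have lhs: "(\<exists>k::int. of_int k = catalan_hankel_prod m n \<and> odd k) \<longleftrightarrow> odd c"
  proof
    assume "\<exists>k::int. of_int k = catalan_hankel_prod m n \<and> odd k"
    then obtain k :: int where k: "of_int k = catalan_hankel_prod m n" "odd k" by blast
    have "(of_int k :: rat) = of_int (int c)" using k(1) Pc by simp
    then have "k = int c" by (simp only: of_int_eq_iff)
    then show "odd c" using k(2) by simp
  next
    assume "odd c"
    then show "\<exists>k::int. of_int k = catalan_hankel_prod m n \<and> odd k"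
      using Pc by (intro exI[of _ "int c"]) simp
  qed
  have p2: "prime (2::nat)" by simp
  have mA: "multiplicity 2 A = multiplicity 2 B + multiplicity 2 c"
    unfolding c by (rule prime_elem_multiplicity_mult_distrib) (use Bnz cnz in auto)
  have oddc: "odd c \<longleftrightarrow> multiplicity 2 A = multiplicity 2 B"
  proof -
    have "multiplicity 2 c = 0 \<longleftrightarrow> \<not> 2 dvd c" using multiplicity_eq_zero_iff[of c "2::nat"] cnz by simp
    then show ?thesis using mA by auto
  qed
  have "multiplicity 2 A = multiplicity 2 B \<longleftrightarrow> (\<Sum>k\<in>{1..N}. SS (2^k) (m-1) n) = 0"
    using key[OF p2] by linarith
  also have "\<dots> \<longleftrightarrow> (\<forall>k\<in>{1..N}. SS (2^k) (m-1) n = 0)"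
    by (rule sum_nonneg_eq_0_iff) (auto intro: SS_nonneg)
  also have "\<dots> \<longleftrightarrow> ((2::nat)^(K+1) dvd n \<or> (2::nat)^(K+1) dvd (n+m))"
  proof (rule char2[OF assms])
    have "K < 2^K" by (rule less_exp)
    then show "K + 2 \<le> N" using assms(1) unfolding N_def by linarith
  qed
  also have "\<dots> \<longleftrightarrow> ([int n = 0] (mod 2 ^ (K + 1)) \<or> [int n = - int m] (mod 2 ^ (K + 1)))"
  proof -
    have e: "(2::int)^(K+1) = int (2^(K+1))" by simp
    have 1: "[int n = 0] (mod 2 ^ (K + 1)) \<longleftrightarrow> (2::nat)^(K+1) dvd n"
      unfolding cong_0_iff e by (simp only: int_dvd_int_iff)
    have "int n - - int m = int (n+m)" by simp
    then have 2: "[int n = - int m] (mod 2 ^ (K + 1)) \<longleftrightarrow> (2::nat)^(K+1) dvd (n+m)"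
      unfolding cong_iff_dvd_diff e by (simp only: int_dvd_int_iff)
    show ?thesis using 1 2 by simp
  qed
  finally show ?thesis using lhs oddc by simp
qed


end
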